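(* Suppose that for each $j=0,\dots,n$ the kernel $K_j$ belongs to $\mathrm{C}^2(0,2\pi)$, satisfies $K_j''<0$ on $(0,2\pi)$, and satisfies $K_j(0)=K_j(2\pi)=-\infty$. Let $S=S_\sigma$ be a simplex. Then the map \[\Delta_\sigma:S\to\mathbb{R}^n,\quad\Delta_\sigma(\mathbf{y})=\big(m_{\sigma(1)}(\mathbf{y})-m_{\sigma(0)}(\mathbf{y}),\dots,m_{\sigma(n)}(\mathbf{y})-m_{\sigma(n-1)}(\mathbf{y})\big)^\top\] is a homeomorphism.
   Context: Identify the torus $\mathbb{T}=\mathbb{R}/2\pi\mathbb{Z}$ with $[0,2\pi)$. The kernels $K_j$ are $2\pi$-periodic functions $\mathbb{R}\to[-\infty,\infty)$, real-valued and concave on $(0,2\pi)$, and $K_j(0)=K_j(2\pi)$ denotes the common value of $\lim_{t\downarrow0}K_j(t)$ and $\lim_{t\uparrow2\pi}K_j(t)$. For $\mathbf{y}\in\mathbb{T}^n$ put $y_0=0$, $y_{n+1}=2\pi$, $F(\mathbf{y},t)=K_0(t)+\sum_{j=1}^nK_j(t-y_j)$. For a permutation $\sigma$ of $\{1,\dots,n\}$ ($\sigma(0)=0,\sigma(n+1)=n+1$), $S_\sigma=\{\mathbf{y}:0<y_{\sigma(1)}<\dots<y_{\sigma(n)}<2\pi\}$; for $\mathbf{y}\in S_\sigma$, $m_{\sigma(k)}(\mathbf{y})=\sup_{t\in[y_{\sigma(k)},y_{\sigma(k+1)}]}F(\mathbf{y},t)$, $k=0,\dots,n$. *)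

theory Defs
  imports "HOL-Analysis.Analysis" "HOL-Library.Extended_Real"
begin

definition kernel_C2_neg :: "(real \<Rightarrow> ereal) \<Rightarrow> bool" where
  "kernel_C2_neg K \<longleftrightarrow>
     (\<exists>k1 k2. continuous_on {0<..<2*pi} k2 \<and>
        (\<forall>t\<in>{0<..<2*pi}.
           ((\<lambda>s. real_of_ereal (K s)) has_real_derivative k1 t) (at t) \<and>
           (k1 has_real_derivative k2 t) (at t) \<and> k2 t < 0))"

definition standing_kernel :: "(real \<Rightarrow> ereal) \<Rightarrow> bool" where
  "standing_kernel K \<longleftrightarrow>
     (\<forall>t. K (t + 2*pi) = K t) \<and>
     (\<forall>t\<in>{0<..<2*pi}. K t \<noteq> -\<infinity> \<and> K t \<noteq> \<infinity>) \<and>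
     concave_on {0<..<2*pi} (\<lambda>t. real_of_ereal (K t))"

definition Fsum :: "(real \<Rightarrow> ereal) \<Rightarrow> ('n::finite \<Rightarrow> real \<Rightarrow> ereal) \<Rightarrow> real^'n \<Rightarrow> real \<Rightarrow> ereal" where
  "Fsum K0 K y t = K0 t + (\<Sum>j\<in>UNIV. K j (t - y $ j))"

definition node :: "(nat \<Rightarrow> 'n::finite) \<Rightarrow> real^'n \<Rightarrow> nat \<Rightarrow> real" where
  "node \<sigma> y k = (if k = 0 then 0 else if k = CARD('n) + 1 then 2*pi else y $ \<sigma> k)"

definition simplex_sigma :: "(nat \<Rightarrow> 'n::finite) \<Rightarrow> (real^'n) set" where
  "simplex_sigma \<sigma> = {y. \<forall>k\<le>CARD('n). node \<sigma> y k < node \<sigma> y (Suc k)}"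

definition mloc :: "(real \<Rightarrow> ereal) \<Rightarrow> ('n::finite \<Rightarrow> real \<Rightarrow> ereal) \<Rightarrow> (nat \<Rightarrow> 'n)
    \<Rightarrow> real^'n \<Rightarrow> nat \<Rightarrow> ereal" where
  "mloc K0 K \<sigma> y k = (SUP t\<in>{node \<sigma> y k .. node \<sigma> y (Suc k)}. Fsum K0 K y t)"

text \<open>Delta_sigma; the k-th difference m_{sigma(k)} - m_{sigma(k-1)} (k = 1..n) is stored
  in coordinate sigma(k) of the output vector.\<close>
definition Delta :: "(real \<Rightarrow> ereal) \<Rightarrow> ('n::finite \<Rightarrow> real \<Rightarrow> ereal) \<Rightarrow> (nat \<Rightarrow> 'n)
    \<Rightarrow> real^'n \<Rightarrow> real^'n" where
  "Delta K0 K \<sigma> y = (\<chi> i. (let k = inv_into {1..CARD('n)} \<sigma> i in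
      real_of_ereal (mloc K0 K \<sigma> y k - mloc K0 K \<sigma> y (k - 1))))"

end

theory Submission
  imports Defs "HOL-Homology.Invariance_of_Domain"
begin


lemma attain_max:
  fixes f :: "real \<Rightarrow> real"
  assumes ab: "a < b" and cont: "continuous_on {a<..<b} f"
   and L: "\<And>B. \<exists>\<delta>>0. \<forall>s. a < s \<and> s < a + \<delta> \<longrightarrow> f s < B"
   and R: "\<And>B. \<exists>\<delta>>0. \<forall>s. b - \<delta> < s \<and> s < b \<longrightarrow> f s < B"
  shows "\<exists>t\<in>{a<..<b}. \<forall>s\<in>{a<..<b}. f s \<le> f t"
proof -
  define c where "c = (a+b)/2"
  obtain d1 where d1: "d1 > 0" "\<forall>s. a < s \<and> s < a + d1 \<longrightarrow> f s < f c" using L by blast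
  obtain d2 where d2: "d2 > 0" "\<forall>s. b - d2 < s \<and> s < b \<longrightarrow> f s < f c" using R by blast
  define e where "e = min (min d1 d2) ((b-a)/2)"
  have e4: "e \<le> (b-a)/2" unfolding e_def by (rule min.cobounded2)
  have e1: "e \<le> d1" "e \<le> d2" unfolding e_def by linarith+
  have e0: "e > 0" unfolding e_def using d1 d2 ab by simp
  note e = e0 e1 e4
  have sub: "{a+e..b-e} \<subseteq> {a<..<b}" using e by auto
  have cin: "c \<in> {a+e..b-e}" using e by (auto simp: c_def)
  obtain t where t: "t \<in> {a+e..b-e}" "\<forall>s\<in>{a+e..b-e}. f s \<le> f t"
    using continuous_attains_sup[of "{a+e..b-e}" f] cin continuous_on_subset[OF cont sub] by auto
  show ?thesis
  proof (intro bexI[of _ t] ballI)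
    show "t \<in> {a<..<b}" using t sub by auto
    fix s assume s: "s \<in> {a<..<b}"
    show "f s \<le> f t"
    proof (cases "s \<in> {a+e..b-e}")
      case True then show ?thesis using t by auto
    next
      case False
      then have "s < a + e \<or> b - e < s" using s by auto
      then have "f s < f c"
      proof
        assume "s < a + e" then show ?thesis using d1(2) s e by auto
      next
        assume "b - e < s" then show ?thesis using d2(2) s e by auto
      qed
      also have "f c \<le> f t" using t cin by auto
      finally show ?thesis by simp
    qed
  qed
qed



lemma kernel_props:
  assumes std: "standing_kernel K" and c2: "kernel_C2_neg K" and z: "K 0 = -\<infinity>"
    and l0: "(K \<longlongrightarrow> -\<infinity>) (at_right 0)" and l2: "(K \<longlongrightarrow> -\<infinity>) (at_left (2*pi))"
  shows "\<forall>t\<in>{0<..<2*pi}. K t = ereal (real_of_ereal (K t))"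
    and "\<forall>t. K (t + 2*pi) = K t"
    and "continuous_on {0<..<2*pi} (\<lambda>s. real_of_ereal (K s))"
    and "concave_on {0<..<2*pi} (\<lambda>s. real_of_ereal (K s))"
    and "\<forall>u v d. 0 < u \<and> u < v \<and> 0 < d \<and> v + d < 2*pi \<longrightarrow>
          real_of_ereal (K (v+d)) - real_of_ereal (K v) < real_of_ereal (K (u+d)) - real_of_ereal (K u)"
    and "\<forall>B. \<exists>\<delta>>0. \<forall>s. 0 < s \<and> s < 0 + \<delta> \<longrightarrow> real_of_ereal (K s) < B"
    and "\<forall>B. \<exists>\<delta>>0. \<forall>s. 2*pi - \<delta> < s \<and> s < 2*pi \<longrightarrow> real_of_ereal (K s) < B"
proof -
  define R where "R = (\<lambda>s. real_of_ereal (K s))"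
  have finr: "\<exists>r. K t = ereal r" if "0 < t" "t < 2*pi" for t
  proof -
    have "K t \<noteq> -\<infinity>" "K t \<noteq> \<infinity>" using std that unfolding standing_kernel_def by auto
    then show ?thesis by (cases "K t") auto
  qed
  show fin: "\<forall>t\<in>{0<..<2*pi}. K t = ereal (real_of_ereal (K t))"
  proof
    fix t :: real assume "t \<in> {0<..<2*pi}"
    then obtain r where "K t = ereal r" using finr by auto
    then show "K t = ereal (real_of_ereal (K t))" by simp
  qed
  show "\<forall>t. K (t + 2*pi) = K t" using std unfolding standing_kernel_def by blast
  show "concave_on {0<..<2*pi} (\<lambda>s. real_of_ereal (K s))" using std unfolding standing_kernel_def by blast
  obtain k1 k2 where kk: "\<forall>t\<in>{0<..<2*pi}. (R has_real_derivative k1 t) (at t) \<and>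
           (k1 has_real_derivative k2 t) (at t) \<and> k2 t < 0"
    using c2 unfolding kernel_C2_neg_def R_def by blast
  have kR: "(R has_real_derivative k1 t) (at t)" if "0 < t" "t < 2*pi" for t
    using kk that by simp
  have kk1: "(k1 has_real_derivative k2 t) (at t)" "k2 t < 0" if "0 < t" "t < 2*pi" for t
    using kk that by simp_all
  show "continuous_on {0<..<2*pi} (\<lambda>s. real_of_ereal (K s))"
    unfolding R_def[symmetric]
  proof (intro continuous_at_imp_continuous_on ballI)
    fix t :: real assume "t \<in> {0<..<2*pi}"
    then show "isCont R t" using kR[of t] DERIV_isCont by simp
  qed
  have k1dec: "k1 q < k1 p" if "0 < p" "p < q" "q < 2*pi" for p q
  proof (rule DERIV_neg_imp_decreasing[of p q k1])
    show "p < q" by fact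
    fix x assume "p \<le> x" "x \<le> q"
    then have "0 < x" "x < 2*pi" using that by linarith+
    then show "\<exists>y. (k1 has_real_derivative y) (at x) \<and> y < 0" using kk1 by blast
  qed
  show "\<forall>u v d. 0 < u \<and> u < v \<and> 0 < d \<and> v + d < 2*pi \<longrightarrow>
          real_of_ereal (K (v+d)) - real_of_ereal (K v) < real_of_ereal (K (u+d)) - real_of_ereal (K u)"
  proof (intro allI impI)
    fix u v d :: real assume h: "0 < u \<and> u < v \<and> 0 < d \<and> v + d < 2*pi"
    have "(\<lambda>x. R (x+d) - R x) v < (\<lambda>x. R (x+d) - R x) u"
    proof (rule DERIV_neg_imp_decreasing[of u v])
      show "u < v" using h by simp
      fix x assume x: "u \<le> x" "x \<le> v"
      have xr: "0 < x" "x < 2*pi" "0 < x + d" "x + d < 2*pi" using x h by linarith+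
      have d1: "(R has_real_derivative k1 (x+d)) (at (x+d))" using kR xr by simp
      have d1': "((\<lambda>x. R (x+d)) has_real_derivative k1 (x+d)) (at x)"
        using d1 DERIV_shift[of R "k1 (x+d)" x d] by simp
      have d2: "(R has_real_derivative k1 x) (at x)" using kR xr by simp
      have "k1 (x+d) < k1 x" using k1dec[of x "x+d"] xr h by simp
      then show "\<exists>y. ((\<lambda>x. R (x+d) - R x) has_real_derivative y) (at x) \<and> y < 0"
        using DERIV_diff[OF d1' d2] by (intro exI[of _ "k1 (x+d) - k1 x"]) simp
    qed
    then show "real_of_ereal (K (v+d)) - real_of_ereal (K v) < real_of_ereal (K (u+d)) - real_of_ereal (K u)"
      by (simp add: R_def)
  qed
  show "\<forall>B. \<exists>\<delta>>0. \<forall>s. 0 < s \<and> s < 0 + \<delta> \<longrightarrow> real_of_ereal (K s) < B"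
  proof
    fix B :: real
    have "eventually (\<lambda>s. K s < ereal B) (at_right 0)" using l0 unfolding tendsto_MInfty by blast
    then obtain b where b: "b > 0" "\<And>s. s > 0 \<Longrightarrow> s < b \<Longrightarrow> K s < ereal B"
      unfolding eventually_at_right_field by auto
    show "\<exists>\<delta>>0. \<forall>s. 0 < s \<and> s < 0 + \<delta> \<longrightarrow> real_of_ereal (K s) < B"
    proof (intro exI[of _ "min b (2*pi)"] conjI allI impI)
      show "0 < min b (2*pi)" using b by simp
      fix s :: real assume s: "0 < s \<and> s < 0 + min b (2*pi)"
      then have s1: "0 < s" "s < b" "s < 2*pi" by auto
      then obtain r where r: "K s = ereal r" using finr by blast
      have "K s < ereal B" using b(2) s1 by blast
      then show "real_of_ereal (K s) < B" using r by simp
    qed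
  qed
  show "\<forall>B. \<exists>\<delta>>0. \<forall>s. 2*pi - \<delta> < s \<and> s < 2*pi \<longrightarrow> real_of_ereal (K s) < B"
  proof
    fix B :: real
    have "eventually (\<lambda>s. K s < ereal B) (at_left (2*pi))" using l2 unfolding tendsto_MInfty by blast
    then obtain b where b: "b < 2*pi" "\<And>s. s > b \<Longrightarrow> s < 2*pi \<Longrightarrow> K s < ereal B"
      unfolding eventually_at_left_field by auto
    show "\<exists>\<delta>>0. \<forall>s. 2*pi - \<delta> < s \<and> s < 2*pi \<longrightarrow> real_of_ereal (K s) < B"
    proof (intro exI[of _ "min (2*pi - b) (2*pi)"] conjI allI impI)
      show "0 < min (2*pi - b) (2*pi)" using b by simp
      fix s :: real assume s: "2*pi - min (2*pi - b) (2*pi) < s \<and> s < 2*pi"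
      then have s1: "0 < s" "b < s" "s < 2*pi" by auto
      then obtain r where r: "K s = ereal r" using finr by blast
      have "K s < ereal B" using b(2) s1 by blast
      then show "real_of_ereal (K s) < B" using r by simp
    qed
  qed
qed




lemma comb_less:
  fixes a a' b b' u v :: real
  assumes "a < a'" "b < b'" "0 \<le> u" "0 \<le> v" "u + v = 1"
  shows "u * a + v * b < u * a' + v * b'"
proof (cases "v = 0")
  case True then show ?thesis using assms by simp
next
  case False
  then have "v * b < v * b'" using assms by simp
  moreover have "u * a \<le> u * a'" using assms by (simp add: mult_left_mono)
  ultimately show ?thesis by simp
qed

locale ksys =
  fixes n :: nat and R :: "nat \<Rightarrow> real \<Rightarrow> real"
  assumes Rcont: "j \<le> n \<Longrightarrow> continuous_on {0<..<2*pi} (R j)"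
   and Rconc: "j \<le> n \<Longrightarrow> concave_on {0<..<2*pi} (R j)"
   and Rinc: "j \<le> n \<Longrightarrow> 0 < u \<Longrightarrow> u < v \<Longrightarrow> 0 < d \<Longrightarrow> v + d < 2*pi \<Longrightarrow>
              R j (v+d) - R j v < R j (u+d) - R j u"
   and Rl0: "j \<le> n \<Longrightarrow> \<exists>\<delta>>0. \<forall>s. 0 < s \<and> s < 0 + \<delta> \<longrightarrow> R j s < B"
   and Rl2: "j \<le> n \<Longrightarrow> \<exists>\<delta>>0. \<forall>s. 2*pi - \<delta> < s \<and> s < 2*pi \<longrightarrow> R j s < B"
begin

definition cfg :: "(nat \<Rightarrow> real) \<Rightarrow> bool" where
  "cfg x \<longleftrightarrow> x 0 = 0 \<and> x (Suc n) = 2*pi \<and> (\<forall>k\<le>n. x k < x (Suc k))"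

definition arg :: "nat \<Rightarrow> nat \<Rightarrow> (nat \<Rightarrow> real) \<Rightarrow> real \<Rightarrow> real" where
  "arg k j x t = (if j \<le> k then t - x j else t - x j + 2*pi)"

definition Phi :: "nat \<Rightarrow> (nat \<Rightarrow> real) \<Rightarrow> real \<Rightarrow> real" where
  "Phi k x t = (\<Sum>j\<le>n. R j (arg k j x t))"

definition mu :: "nat \<Rightarrow> (nat \<Rightarrow> real) \<Rightarrow> real" where
  "mu k x = Sup (Phi k x ` {x k<..<x (Suc k)})"

lemma cfg_less: "cfg x \<Longrightarrow> i < j \<Longrightarrow> j \<le> Suc n \<Longrightarrow> x i < x j"
proof (induction j)
  case 0 then show ?case by simp
next
  case (Suc j)
  have xs: "x j < x (Suc j)" using Suc.prems by (simp add: cfg_def)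
  show ?case
  proof (cases "i < j")
    case True then have "x i < x j" using Suc by simp
    then show ?thesis using xs by simp
  next
    case False then have "i = j" using Suc.prems by simp
    then show ?thesis using xs by simp
  qed
qed

lemma cfg_le: "cfg x \<Longrightarrow> i \<le> j \<Longrightarrow> j \<le> Suc n \<Longrightarrow> x i \<le> x j"
  using cfg_less[of x i j] by (cases "i = j") auto

lemma cfg_range: "cfg x \<Longrightarrow> k \<le> Suc n \<Longrightarrow> 0 \<le> x k \<and> x k \<le> 2*pi"
  using cfg_le[of x 0 k] cfg_le[of x k "Suc n"] by (auto simp: cfg_def)

lemma cfg_lt2pi: "cfg x \<Longrightarrow> k \<le> n \<Longrightarrow> x k < 2*pi"
  using cfg_less[of x k "Suc n"] by (auto simp: cfg_def)

lemma arg_range: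
  assumes "cfg x" "k \<le> n" "j \<le> n" "x k < t" "t < x (Suc k)"
  shows "0 < arg k j x t \<and> arg k j x t < 2*pi"
proof (cases "j \<le> k")
  case True
  then have "x j \<le> x k" "0 \<le> x j" "x (Suc k) \<le> 2*pi"
    using assms cfg_le[of x j k] cfg_range[of x j] cfg_range[of x "Suc k"] by auto
  then show ?thesis using True assms by (auto simp: arg_def)
next
  case False
  then have "x (Suc k) \<le> x j" "x j < 2*pi" "0 \<le> x k"
    using assms cfg_le[of x "Suc k" j] cfg_lt2pi[of x j] cfg_range[of x k] by auto
  then show ?thesis using False assms by (auto simp: arg_def)
qed

lemma arg_shift: "arg k j x (t + c) = arg k j x t + c"
  by (simp add: arg_def)

lemma arg_other: "arg k j x' t = arg k j x t + (x j - x' j)"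
  by (simp add: arg_def)

lemma arg_right: "cfg x \<Longrightarrow> k \<le> n \<Longrightarrow>
   arg k (if k < n then Suc k else 0) x t = t - x (Suc k) + 2*pi"
  by (auto simp: arg_def cfg_def)

lemma Rbound:
  assumes j: "j \<le> n" shows "\<exists>U. \<forall>s\<in>{0<..<2*pi}. R j s \<le> U"
proof -
  have "\<exists>t\<in>{0<..<2*pi}. \<forall>s\<in>{0<..<2*pi}. R j s \<le> R j t"
    by (rule attain_max[of 0 "2*pi" "R j", OF _ Rcont[OF j] Rl0[OF j] Rl2[OF j]]) simp
  then show ?thesis by blast
qed

definition Ub :: "nat \<Rightarrow> real" where
  "Ub j = (SOME U. \<forall>s\<in>{0<..<2*pi}. R j s \<le> U)"

lemma Ub: "j \<le> n \<Longrightarrow> 0 < s \<Longrightarrow> s < 2*pi \<Longrightarrow> R j s \<le> Ub j"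
  using someI_ex[OF Rbound[of j]] unfolding Ub_def by auto

definition Ut :: real where "Ut = (\<Sum>j\<le>n. Ub j)"

lemma Phi_le_term:
  assumes "cfg x" "k \<le> n" "j \<le> n" "x k < t" "t < x (Suc k)"
  shows "Phi k x t \<le> R j (arg k j x t) + (Ut - Ub j)"
proof -
  have "Phi k x t = R j (arg k j x t) + (\<Sum>i\<in>{..n}-{j}. R i (arg k i x t))"
    unfolding Phi_def using assms(3) by (simp add: sum.remove)
  also have "(\<Sum>i\<in>{..n}-{j}. R i (arg k i x t)) \<le> (\<Sum>i\<in>{..n}-{j}. Ub i)"
    by (intro sum_mono) (use Ub arg_range assms in auto)
  also have "(\<Sum>i\<in>{..n}-{j}. Ub i) = Ut - Ub j"
    unfolding Ut_def using assms(3) by (simp add: sum_diff1)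
  finally show ?thesis by simp
qed

lemma Phi_cont:
  assumes "cfg x" "k \<le> n"
  shows "continuous_on {x k<..<x (Suc k)} (Phi k x)"
  unfolding Phi_def
proof (intro continuous_on_sum)
  fix j assume j: "j \<in> {..n}"
  have c: "continuous_on {x k<..<x (Suc k)} (\<lambda>t. arg k j x t)"
    unfolding arg_def by (cases "j \<le> k") (auto intro!: continuous_intros)
  show "continuous_on {x k<..<x (Suc k)} (\<lambda>t. R j (arg k j x t))"
    by (rule continuous_on_compose2[OF Rcont c]) (use j arg_range assms in auto)
qed

lemma mu_attain:
  assumes "cfg x" "k \<le> n"
  shows "\<exists>t. x k < t \<and> t < x (Suc k) \<and> mu k x = Phi k x t \<and>
             (\<forall>s. x k < s \<and> s < x (Suc k) \<longrightarrow> Phi k x s \<le> Phi k x t)"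
proof -
  have ab: "x k < x (Suc k)" using assms by (auto simp: cfg_def)
  have L: "\<exists>\<delta>>0. \<forall>s. x k < s \<and> s < x k + \<delta> \<longrightarrow> Phi k x s < B" for B
  proof -
    obtain d where d: "d > 0" "\<forall>s. 0 < s \<and> s < 0 + d \<longrightarrow> R k s < B - (Ut - Ub k)"
      using Rl0[OF assms(2)] by blast
    show ?thesis
    proof (intro exI[of _ "min d (x (Suc k) - x k)"] conjI allI impI)
      fix s assume s: "x k < s \<and> s < x k + min d (x (Suc k) - x k)"
      have "Phi k x s \<le> R k (arg k k x s) + (Ut - Ub k)"
        using Phi_le_term[OF assms(1,2) assms(2)] s by auto
      moreover have "R k (arg k k x s) < B - (Ut - Ub k)"
        using d s by (auto simp: arg_def)
      ultimately show "Phi k x s < B" by simp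
    qed (use d ab in auto)
  qed
  have R: "\<exists>\<delta>>0. \<forall>s. x (Suc k) - \<delta> < s \<and> s < x (Suc k) \<longrightarrow> Phi k x s < B" for B
  proof -
    define jr where "jr = (if k < n then Suc k else 0)"
    have jr: "jr \<le> n" using assms by (auto simp: jr_def)
    obtain d where d: "d > 0" "\<forall>s. 2*pi - d < s \<and> s < 2*pi \<longrightarrow> R jr s < B - (Ut - Ub jr)"
      using Rl2[OF jr] by blast
    show ?thesis
    proof (intro exI[of _ "min d (x (Suc k) - x k)"] conjI allI impI)
      fix s assume s: "x (Suc k) - min d (x (Suc k) - x k) < s \<and> s < x (Suc k)"
      have "Phi k x s \<le> R jr (arg k jr x s) + (Ut - Ub jr)"
        using Phi_le_term[OF assms(1,2) jr] s by auto
      moreover have "R jr (arg k jr x s) < B - (Ut - Ub jr)"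
        using d s arg_right[OF assms, of s] unfolding jr_def[symmetric] by auto
      ultimately show "Phi k x s < B" by simp
    qed (use d ab in auto)
  qed
  obtain t where t: "t \<in> {x k<..<x (Suc k)}" "\<forall>s\<in>{x k<..<x (Suc k)}. Phi k x s \<le> Phi k x t"
    using attain_max[OF ab Phi_cont[OF assms] L R] by blast
  have "mu k x = Phi k x t"
    unfolding mu_def by (rule cSup_eq_maximum) (use t in auto)
  then show ?thesis using t by auto
qed

lemma mu_ge: "cfg x \<Longrightarrow> k \<le> n \<Longrightarrow> x k < t \<Longrightarrow> t < x (Suc k) \<Longrightarrow> Phi k x t \<le> mu k x"
  using mu_attain[of x k] by auto

end



context ksys begin

lemma cfg_comb:
  assumes "cfg x1" "cfg x2" "0 \<le> u" "0 \<le> v" "u + v = 1"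
  shows "cfg (\<lambda>i. u * x1 i + v * x2 i)"
proof -
  have "u * (2*pi) + v * (2*pi) = (u+v) * (2*pi)" by (simp add: algebra_simps)
  then show ?thesis using assms comb_less[OF _ _ assms(3-5)] by (auto simp: cfg_def)
qed

lemma mu_concave:
  assumes x1: "cfg x1" and x2: "cfg x2" and uv: "0 \<le> u" "0 \<le> v" "u + v = 1" and k: "k \<le> n"
  shows "u * mu k x1 + v * mu k x2 \<le> mu k (\<lambda>i. u * x1 i + v * x2 i)"
proof -
  define xl where "xl = (\<lambda>i. u * x1 i + v * x2 i)"
  obtain t1 where t1: "x1 k < t1" "t1 < x1 (Suc k)" "mu k x1 = Phi k x1 t1" using mu_attain[OF x1 k] by auto
  obtain t2 where t2: "x2 k < t2" "t2 < x2 (Suc k)" "mu k x2 = Phi k x2 t2" using mu_attain[OF x2 k] by auto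
  define tl where "tl = u * t1 + v * t2"
  have xl: "cfg xl" unfolding xl_def by (rule cfg_comb[OF x1 x2 uv])
  have tl1: "xl k < tl" unfolding xl_def tl_def by (rule comb_less[OF t1(1) t2(1) uv])
  have tl2: "tl < xl (Suc k)" unfolding xl_def tl_def by (rule comb_less[OF t1(2) t2(2) uv])
  have argc: "arg k j xl tl = u * arg k j x1 t1 + v * arg k j x2 t2" for j
  proof -
    have v: "v = 1 - u" using uv by simp
    show ?thesis unfolding arg_def xl_def tl_def v by (simp add: algebra_simps)
  qed
  have "u * Phi k x1 t1 + v * Phi k x2 t2 = (\<Sum>j\<le>n. u * R j (arg k j x1 t1) + v * R j (arg k j x2 t2))"
    unfolding Phi_def by (simp add: sum.distrib sum_distrib_left)
  also have "\<dots> \<le> (\<Sum>j\<le>n. R j (arg k j xl tl))"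
  proof (intro sum_mono)
    fix j assume j: "j \<in> {..n}"
    have c: "concave_on {0<..<2*pi} (R j)" using Rconc j by auto
    have a1: "arg k j x1 t1 \<in> {0<..<2*pi}" using arg_range[OF x1 k _ t1(1,2)] j by auto
    have a2: "arg k j x2 t2 \<in> {0<..<2*pi}" using arg_range[OF x2 k _ t2(1,2)] j by auto
    show "u * R j (arg k j x1 t1) + v * R j (arg k j x2 t2) \<le> R j (arg k j xl tl)"
      using c a1 a2 uv unfolding concave_on_iff argc by auto
  qed
  also have "\<dots> = Phi k xl tl" unfolding Phi_def ..
  also have "\<dots> \<le> mu k xl" by (rule mu_ge[OF xl k tl1 tl2])
  finally show ?thesis using t1 t2 unfolding xl_def by simp
qed

lemma inc_le:
  assumes "j \<le> n" "0 < u" "u \<le> v" "0 \<le> d" "v + d < 2*pi"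
  shows "R j (v+d) - R j v \<le> R j (u+d) - R j u"
proof (cases "u = v \<or> d = 0")
  case True then show ?thesis by auto
next
  case False then show ?thesis using Rinc[of j u v d] assms by auto
qed

lemma core:
  assumes x: "cfg x" and x': "cfg x'" and ne: "\<exists>j\<le>n. x' j \<noteq> x j"
  shows "\<exists>p\<le>n. \<exists>q\<le>n. mu p x' - mu p x < mu q x' - mu q x"
proof -
  define w where "w j = x' j - x j" for j
  define M where "M = Max (w ` {..n})"
  have wM: "w j \<le> M" if "j \<le> n" for j unfolding M_def using that by (auto intro: Max_ge)
  have "M \<in> w ` {..n}" unfolding M_def by (rule Max_in) auto
  then obtain p where p: "p \<le> n" "w p = M" by auto
  have w0: "w 0 = 0" using x x' by (simp add: w_def cfg_def)
  have wS: "w (Suc n) = 0" using x x' by (simp add: w_def cfg_def)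
  have M0: "0 \<le> M" using wM[of 0] w0 by simp
  show ?thesis
  proof (cases "M = 0")
    case True
    obtain a where a: "x' 0 < a" "a < x' (Suc 0)" "mu 0 x' = Phi 0 x' a"
      using mu_attain[OF x', of 0] by auto
    obtain b where b: "x n < b" "b < x (Suc n)" "mu n x = Phi n x b"
      using mu_attain[OF x, of n] by auto
    have x1: "x' (Suc 0) \<le> x (Suc 0)"
    proof (cases "Suc 0 \<le> n")
      case True then show ?thesis using wM[of "Suc 0"] \<open>M = 0\<close> by (simp add: w_def)
    next
      case False then have "Suc 0 = Suc n" by simp
      then show ?thesis using wS by (simp add: w_def)
    qed
    have a_in: "x 0 < a" "a < x (Suc 0)" using a x1 x x' by (auto simp: cfg_def)
    have b_in: "x' n < b" "b < x' (Suc n)"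
      using b wM[of n] \<open>M = 0\<close> wS by (auto simp: w_def)
    have ge1: "Phi 0 x a \<le> mu 0 x" using mu_ge[OF x _ a_in] by simp
    have ge2: "Phi n x' b \<le> mu n x'" using mu_ge[OF x' _ b_in] by simp
    have A: "arg 0 j x' a = arg 0 j x a + (x j - x' j)" for j by (simp add: arg_def)
    have B: "arg n j x' b = arg n j x b + (x j - x' j)" for j by (simp add: arg_def)
    have "Phi 0 x' a - Phi 0 x a = (\<Sum>j\<le>n. R j (arg 0 j x a + (x j - x' j)) - R j (arg 0 j x a))"
      unfolding Phi_def A by (simp add: sum_subtractf)
    also have "\<dots> < (\<Sum>j\<le>n. R j (arg n j x b + (x j - x' j)) - R j (arg n j x b))"
    proof (rule sum_strict_mono_ex1)
      show "finite {..n}" by simp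
      show "\<forall>j\<in>{..n}. R j (arg 0 j x a + (x j - x' j)) - R j (arg 0 j x a)
                   \<le> R j (arg n j x b + (x j - x' j)) - R j (arg n j x b)"
      proof
        fix j assume j: "j \<in> {..n}"
        show "R j (arg 0 j x a + (x j - x' j)) - R j (arg 0 j x a)
                   \<le> R j (arg n j x b + (x j - x' j)) - R j (arg n j x b)"
        proof (cases "j = 0")
          case True then show ?thesis using x x' by (simp add: cfg_def)
        next
          case False
          have r1: "0 < arg n j x b" using arg_range[OF x _ _ b(1,2)] j by auto
          have r2: "arg 0 j x' a < 2*pi" using arg_range[OF x' _ _ a(1,2)] j by auto
          have lt: "arg n j x b \<le> arg 0 j x a"
            using False j a_in b x by (auto simp: arg_def cfg_def)
          have d: "0 \<le> x j - x' j" using wM[of j] j \<open>M = 0\<close> by (auto simp: w_def)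
          show ?thesis using inc_le[OF _ r1 lt d] r2 j unfolding A by auto
        qed
      qed
      obtain j where j: "j \<le> n" "x' j \<noteq> x j" using ne by auto
      have jn0: "j \<noteq> 0"
      proof
        assume "j = 0" then show False using j(2) x x' by (simp add: cfg_def)
      qed
      have r1: "0 < arg n j x b" using arg_range[OF x _ _ b(1,2)] j by auto
      have r2: "arg 0 j x' a < 2*pi" using arg_range[OF x' _ _ a(1,2)] j by auto
      have lt: "arg n j x b < arg 0 j x a"
        using jn0 j a_in b x by (auto simp: arg_def cfg_def)
      have d: "0 < x j - x' j" using wM[of j] j \<open>M = 0\<close> by (auto simp: w_def)
      show "\<exists>j\<in>{..n}. R j (arg 0 j x a + (x j - x' j)) - R j (arg 0 j x a)
                   < R j (arg n j x b + (x j - x' j)) - R j (arg n j x b)"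
        using Rinc[OF _ r1 lt d] r2 j unfolding A by auto
    qed
    also have "\<dots> = Phi n x' b - Phi n x b"
      unfolding Phi_def B by (simp add: sum_subtractf)
    finally have "mu 0 x' - mu 0 x < mu n x' - mu n x" using a b ge1 ge2 by linarith
    then show ?thesis by blast
  next
    case False
    then have Mpos: "M > 0" using M0 by simp
    have p0: "p \<noteq> 0"
    proof
      assume "p = 0" then show False using p w0 Mpos by simp
    qed
    have Sp: "Suc (p - 1) = p" using p0 by simp
    obtain a where a: "x' p < a" "a < x' (Suc p)" "mu p x' = Phi p x' a"
      using mu_attain[OF x' p(1)] by auto
    obtain b where b: "x (p-1) < b" "b < x p" "mu (p-1) x = Phi (p-1) x b"
      using mu_attain[OF x, of "p-1"] p Sp by auto
    define s where "s = a - M"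
    have wSp: "w (Suc p) \<le> M"
    proof (cases "Suc p \<le> n")
      case True then show ?thesis using wM by simp
    next
      case False then have "Suc p = Suc n" using p by simp
      then show ?thesis using wS M0 by simp
    qed
    have s_in: "x p < s" "s < x (Suc p)" using a p wSp by (auto simp: s_def w_def)
    have bM_in: "x' (p-1) < b + M" "b + M < x' (Suc (p-1))"
      using b wM[of "p-1"] p Sp by (auto simp: w_def)
    have ge1: "Phi p x s \<le> mu p x" using mu_ge[OF x p(1) s_in] .
    have ge2: "Phi (p-1) x' (b+M) \<le> mu (p-1) x'" using mu_ge[OF x' _ bM_in] p by simp
    have A: "arg p j x' a = arg p j x s + (M - w j)" for j by (simp add: arg_def s_def w_def)
    have B: "arg (p-1) j x' (b+M) = arg (p-1) j x b + (M - w j)" for j by (simp add: arg_def w_def)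
    have "Phi p x' a - Phi p x s = (\<Sum>j\<le>n. R j (arg p j x s + (M - w j)) - R j (arg p j x s))"
      unfolding Phi_def A by (simp add: sum_subtractf)
    also have "\<dots> < (\<Sum>j\<le>n. R j (arg (p-1) j x b + (M - w j)) - R j (arg (p-1) j x b))"
    proof (rule sum_strict_mono_ex1)
      show "finite {..n}" by simp
      have main: "R j (arg p j x s + (M - w j)) - R j (arg p j x s)
                   \<le> R j (arg (p-1) j x b + (M - w j)) - R j (arg (p-1) j x b)
          \<and> (j = 0 \<longrightarrow> R j (arg p j x s + (M - w j)) - R j (arg p j x s)
                   < R j (arg (p-1) j x b + (M - w j)) - R j (arg (p-1) j x b))" if j: "j \<le> n" for j
      proof (cases "j = p")
        case True then show ?thesis using p p0 by simp
      next
        case False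
        have r1: "0 < arg (p-1) j x b" using arg_range[OF x _ _ b(1)] b(2) Sp p j by auto
        have r2: "arg p j x s + (M - w j) < 2*pi" using arg_range[OF x' p(1) j a(1,2)] A by auto
        have lt: "arg (p-1) j x b < arg p j x s"
          using False j s_in b p0 by (auto simp: arg_def)
        have d: "0 \<le> M - w j" using wM[OF j] by simp
        have d0: "j = 0 \<longrightarrow> 0 < M - w j" using w0 Mpos by simp
        show ?thesis using inc_le[OF j r1 less_imp_le[OF lt] d r2] Rinc[OF j r1 lt _ r2] d0 by auto
      qed
      show "\<forall>j\<in>{..n}. R j (arg p j x s + (M - w j)) - R j (arg p j x s)
                   \<le> R j (arg (p-1) j x b + (M - w j)) - R j (arg (p-1) j x b)"
        using main by auto
      show "\<exists>j\<in>{..n}. R j (arg p j x s + (M - w j)) - R j (arg p j x s)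
                   < R j (arg (p-1) j x b + (M - w j)) - R j (arg (p-1) j x b)"
        using main[of 0] by auto
    qed
    also have "\<dots> = Phi (p-1) x' (b+M) - Phi (p-1) x b"
      unfolding Phi_def B by (simp add: sum_subtractf)
    finally have lt: "mu p x' - mu p x < mu (p-1) x' - mu (p-1) x" using a b ge1 ge2 by linarith
    have pn: "p - 1 \<le> n" using p by simp
    show ?thesis
      by (rule exI[of _ p], rule conjI[OF p(1)], rule exI[of _ "p-1"]) (use pn lt in simp)
  qed
qed

end



context ksys begin

lemma mu_upper:
  assumes "cfg x" "k \<le> n" "\<forall>s. 0 < s \<and> s < x (Suc k) - x k \<longrightarrow> R k s < B"
  shows "mu k x \<le> B + (Ut - Ub k)"
proof -
  obtain t where t: "x k < t" "t < x (Suc k)" "mu k x = Phi k x t" using mu_attain[OF assms(1,2)] by auto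
  have "Phi k x t \<le> R k (arg k k x t) + (Ut - Ub k)" using Phi_le_term[OF assms(1,2,2) t(1,2)] .
  moreover have "arg k k x t = t - x k" by (simp add: arg_def)
  moreover have "R k (t - x k) < B" using assms(3) t by auto
  ultimately show ?thesis using t(3) by simp
qed

lemma lim_props:
  assumes X: "\<And>m. cfg (X m)" and lim: "\<And>i. i \<le> Suc n \<Longrightarrow> (\<lambda>m. X m i) \<longlonglongrightarrow> xs i"
  shows "xs 0 = 0" "xs (Suc n) = 2*pi" "\<And>i j. i \<le> j \<Longrightarrow> j \<le> Suc n \<Longrightarrow> xs i \<le> xs j"
proof -
  have "(\<lambda>m. X m 0) = (\<lambda>m. 0)" using X by (simp add: cfg_def)
  then have "(\<lambda>m. X m 0) \<longlonglongrightarrow> 0" by simp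
  then show "xs 0 = 0" using LIMSEQ_unique lim[of 0] by auto
  have "(\<lambda>m. X m (Suc n)) = (\<lambda>m. 2*pi)" using X by (simp add: cfg_def)
  then have "(\<lambda>m. X m (Suc n)) \<longlonglongrightarrow> 2*pi" by simp
  then show "xs (Suc n) = 2*pi" using LIMSEQ_unique lim[of "Suc n"] by auto
  fix i j assume ij: "i \<le> j" "j \<le> Suc n"
  show "xs i \<le> xs j"
    by (rule LIMSEQ_le[OF lim[of i] lim[of j]]) (use cfg_le X ij in auto)
qed

lemma mu_lower_seq:
  assumes X: "\<And>m. cfg (X m)" and lim: "\<And>i. i \<le> Suc n \<Longrightarrow> (\<lambda>m. X m i) \<longlonglongrightarrow> xs i"
   and k: "k \<le> n" and nd: "xs k < xs (Suc k)"
  shows "\<exists>L. eventually (\<lambda>m. L \<le> mu k (X m)) sequentially"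
proof -
  note lp = lim_props[OF X lim]
  define t0 where "t0 = (xs k + xs (Suc k)) / 2"
  have t0: "xs k < t0" "t0 < xs (Suc k)" using nd by (auto simp: t0_def)
  have ar: "0 < arg k j xs t0 \<and> arg k j xs t0 < 2*pi" if j: "j \<le> n" for j
  proof (cases "j \<le> k")
    case True
    have "xs j \<le> xs k" "0 \<le> xs j" "xs (Suc k) \<le> 2*pi"
      using lp(3)[of j k] lp(3)[of 0 j] lp(1) lp(3)[of "Suc k" "Suc n"] lp(2) True k j by auto
    then show ?thesis using True t0 by (auto simp: arg_def)
  next
    case False
    have "xs (Suc k) \<le> xs j" "xs j \<le> 2*pi" "0 \<le> xs k"
      using lp(3)[of "Suc k" j] lp(3)[of j "Suc n"] lp(2) lp(3)[of 0 k] lp(1) False k j by auto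
    then show ?thesis using False t0 by (auto simp: arg_def)
  qed
  have conv: "(\<lambda>m. Phi k (X m) t0) \<longlonglongrightarrow> Phi k xs t0"
    unfolding Phi_def
  proof (intro tendsto_sum)
    fix j assume j: "j \<in> {..n}"
    have ic: "isCont (R j) (arg k j xs t0)"
      using Rcont[of j] j ar[of j] continuous_on_eq_continuous_at[of "{0<..<2*pi}" "R j"] by auto
    have lj: "(\<lambda>m. X m j) \<longlonglongrightarrow> xs j" using lim j by simp
    have ca: "(\<lambda>m. arg k j (X m) t0) \<longlonglongrightarrow> arg k j xs t0"
      unfolding arg_def using lj by (cases "j \<le> k") (auto intro!: tendsto_intros)
    show "(\<lambda>m. R j (arg k j (X m) t0)) \<longlonglongrightarrow> R j (arg k j xs t0)"
      by (rule isCont_tendsto_compose[OF ic ca])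
  qed
  have lk: "(\<lambda>m. X m k) \<longlonglongrightarrow> xs k" using lim k by simp
  have lk1: "(\<lambda>m. X m (Suc k)) \<longlonglongrightarrow> xs (Suc k)" using lim k by simp
  have e1: "eventually (\<lambda>m. Phi k xs t0 - 1 < Phi k (X m) t0) sequentially"
    using order_tendstoD(1)[OF conv, of "Phi k xs t0 - 1"] by simp
  have e2: "eventually (\<lambda>m. X m k < t0) sequentially"
    using order_tendstoD(2)[OF lk t0(1)] .
  have e3: "eventually (\<lambda>m. t0 < X m (Suc k)) sequentially"
    using order_tendstoD(1)[OF lk1 t0(2)] .
  have "eventually (\<lambda>m. Phi k xs t0 - 1 \<le> mu k (X m)) sequentially"
    using e1 e2 e3
  proof eventually_elim
    case (elim m)
    then show ?case using mu_ge[OF X[of m] k, of t0] by simp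
  qed
  then show ?thesis by (rule exI)
qed

lemma boundary_contra:
  assumes X: "\<And>m. cfg (X m)" and lim: "\<And>i. i \<le> Suc n \<Longrightarrow> (\<lambda>m. X m i) \<longlonglongrightarrow> xs i"
    and deg: "k \<le> n" "xs k = xs (Suc k)"
    and bd: "\<And>m k. k \<le> n \<Longrightarrow> \<bar>mu k (X m) - mu 0 (X m)\<bar> \<le> C"
  shows False
proof -
  note lp = lim_props[OF X lim]
  have "\<exists>l\<le>n. xs l < xs (Suc l)"
  proof (rule ccontr)
    assume "\<not> ?thesis"
    then have eq: "xs (Suc l) = xs l" if "l \<le> n" for l using lp(3)[of l "Suc l"] that by force
    have all: "l \<le> Suc n \<Longrightarrow> xs l = xs 0" for l by (induction l) (use eq in auto)
    have "xs (Suc n) = xs 0" using all[of "Suc n"] by simp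
    then show False using lp(1,2) by simp
  qed
  then obtain l where l: "l \<le> n" "xs l < xs (Suc l)" by blast
  obtain L where L: "eventually (\<lambda>m. L \<le> mu l (X m)) sequentially" using mu_lower_seq[OF X lim l] ..
  define B where "B = L - 2*C - 1 - (Ut - Ub k)"
  obtain \<delta> where \<delta>: "\<delta> > 0" "\<forall>s. 0 < s \<and> s < 0 + \<delta> \<longrightarrow> R k s < B" using Rl0[OF deg(1)] by blast
  have l1: "(\<lambda>m. X m (Suc k)) \<longlonglongrightarrow> xs (Suc k)" using lim[of "Suc k"] deg(1) by simp
  have l2: "(\<lambda>m. X m k) \<longlonglongrightarrow> xs k" using lim[of k] deg(1) by simp
  have gap: "(\<lambda>m. X m (Suc k) - X m k) \<longlonglongrightarrow> 0" using tendsto_diff[OF l1 l2] deg by simp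
  have eg: "eventually (\<lambda>m. X m (Suc k) - X m k < \<delta>) sequentially" using order_tendstoD(2)[OF gap \<delta>(1)] .
  obtain N where N: "\<forall>m\<ge>N. L \<le> mu l (X m) \<and> X m (Suc k) - X m k < \<delta>"
    using eventually_conj[OF L eg] unfolding eventually_sequentially by blast
  then have m: "L \<le> mu l (X N)" "X N (Suc k) - X N k < \<delta>" by auto
  have "mu k (X N) \<le> B + (Ut - Ub k)"
    by (rule mu_upper[OF X deg(1)]) (use \<delta> m in auto)
  moreover have "\<bar>mu k (X N) - mu 0 (X N)\<bar> \<le> C" "\<bar>mu l (X N) - mu 0 (X N)\<bar> \<le> C" using bd deg l by auto
  ultimately show False using m unfolding B_def by linarith
qed

end



lemma esum_minf:
  fixes f :: "'a \<Rightarrow> ereal"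
  assumes "finite A" "a \<in> A" "f a = -\<infinity>" "\<forall>i\<in>A. f i \<noteq> \<infinity>"
  shows "sum f A = -\<infinity>"
proof -
  have "sum f A = f a + sum f (A - {a})" using assms by (simp add: sum.remove)
  moreover have "sum f (A - {a}) \<noteq> \<infinity>" using assms by (simp add: sum_Pinfty)
  ultimately show ?thesis using assms(3) by simp
qed

theorem corollary9p3:
  fixes K0 :: "real \<Rightarrow> ereal" and K :: "'n::finite \<Rightarrow> real \<Rightarrow> ereal"
    and \<sigma> :: "nat \<Rightarrow> 'n"
  assumes std: "standing_kernel K0" "\<And>j. standing_kernel (K j)"
    and C2: "kernel_C2_neg K0" "\<And>j. kernel_C2_neg (K j)"
    and inf0: "K0 0 = -\<infinity>" "(K0 \<longlongrightarrow> -\<infinity>) (at_right 0)" "(K0 \<longlongrightarrow> -\<infinity>) (at_left (2*pi))"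
    and infj: "\<And>j. K j 0 = -\<infinity>" "\<And>j. (K j \<longlongrightarrow> -\<infinity>) (at_right 0)"
              "\<And>j. (K j \<longlongrightarrow> -\<infinity>) (at_left (2*pi))"
    and perm: "bij_betw \<sigma> {1..CARD('n)} (UNIV :: 'n set)"
  shows "\<exists>g. homeomorphism (simplex_sigma \<sigma>) (UNIV :: (real^'n) set) (Delta K0 K \<sigma>) g"
proof -
  define n where "n = CARD('n)"
  define kern where "kern j = (if j = 0 then K0 else K (\<sigma> j))" for j
  define R where "R = (\<lambda>j s. real_of_ereal (kern j s))"
  have KP: "standing_kernel (kern j) \<and> kernel_C2_neg (kern j) \<and> kern j 0 = -\<infinity> \<and>
      (kern j \<longlongrightarrow> -\<infinity>) (at_right 0) \<and> (kern j \<longlongrightarrow> -\<infinity>) (at_left (2*pi))" for j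
    by (cases "j = 0") (simp_all add: kern_def std C2 inf0 infj)
  have P1: "\<forall>t\<in>{0<..<2*pi}. kern j t = ereal (R j t)" for j
    using KP[of j] kernel_props(1)[of "kern j"] unfolding R_def by blast
  have P2: "\<forall>t. kern j (t + 2*pi) = kern j t" for j
    using KP[of j] kernel_props(2)[of "kern j"] by blast
  have P3: "continuous_on {0<..<2*pi} (R j)" for j
    using KP[of j] kernel_props(3)[of "kern j"] unfolding R_def by blast
  have P4: "concave_on {0<..<2*pi} (R j)" for j
    using KP[of j] kernel_props(4)[of "kern j"] unfolding R_def by blast
  have P5: "\<forall>u v d. 0 < u \<and> u < v \<and> 0 < d \<and> v + d < 2*pi \<longrightarrow>
          R j (v+d) - R j v < R j (u+d) - R j u" for j
    using KP[of j] kernel_props(5)[of "kern j"] unfolding R_def by blast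
  have P6: "\<forall>B. \<exists>\<delta>>0. \<forall>s. 0 < s \<and> s < 0 + \<delta> \<longrightarrow> R j s < B" for j
    using KP[of j] kernel_props(6)[of "kern j"] unfolding R_def by blast
  have P7: "\<forall>B. \<exists>\<delta>>0. \<forall>s. 2*pi - \<delta> < s \<and> s < 2*pi \<longrightarrow> R j s < B" for j
    using KP[of j] kernel_props(7)[of "kern j"] unfolding R_def by blast
  have kz: "kern j 0 = -\<infinity>" for j using KP[of j] by blast
  interpret ks: ksys n R
  proof
    fix j :: nat and u v d B :: real
    show "continuous_on {0<..<2*pi} (R j)" by (rule P3)
    show "concave_on {0<..<2*pi} (R j)" by (rule P4)
    show "0 < u \<Longrightarrow> u < v \<Longrightarrow> 0 < d \<Longrightarrow> v + d < 2*pi \<Longrightarrow> R j (v+d) - R j v < R j (u+d) - R j u"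
      using P5[of j] by blast
    show "\<exists>\<delta>>0. \<forall>s. 0 < s \<and> s < 0 + \<delta> \<longrightarrow> R j s < B" using P6[of j] by blast
    show "\<exists>\<delta>>0. \<forall>s. 2*pi - \<delta> < s \<and> s < 2*pi \<longrightarrow> R j s < B" using P7[of j] by blast
  qed
  define S where "S = simplex_sigma \<sigma>"
  define mu where "mu = ksys.mu n R"
  define cfg where "cfg = ksys.cfg n"
  define Phi where "Phi = ksys.Phi n R"
  have inj: "inj_on \<sigma> {1..n}" using perm unfolding n_def bij_betw_def by simp
  have surj: "\<sigma> ` {1..n} = UNIV" using perm unfolding n_def bij_betw_def by simp
  have node0: "node \<sigma> y 0 = 0" for y by (simp add: node_def)
  have nodeS: "node \<sigma> y (Suc n) = 2*pi" for y by (simp add: node_def n_def)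
  have nodek: "k \<in> {1..n} \<Longrightarrow> node \<sigma> y k = y $ \<sigma> k" for y k by (auto simp: node_def n_def)
  have cfgS: "cfg (node \<sigma> y)" if "y \<in> S" for y
    using that unfolding cfg_def ks.cfg_def S_def simplex_sigma_def n_def[symmetric]
    by (simp add: node0 nodeS)
  have Fsum_eq: "Fsum K0 K y t = (\<Sum>j\<le>n. kern j (t - node \<sigma> y j))" for y t
  proof -
    have "(\<Sum>j\<in>UNIV. K j (t - y $ j)) = (\<Sum>i\<in>{1..n}. K (\<sigma> i) (t - y $ \<sigma> i))"
      using sum.reindex_bij_betw[OF perm, of "\<lambda>j. K j (t - y $ j)"] unfolding n_def by simp
    also have "\<dots> = (\<Sum>i\<in>{1..n}. kern i (t - node \<sigma> y i))"
      by (rule sum.cong) (auto simp: kern_def nodek)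
    finally have e: "(\<Sum>j\<in>UNIV. K j (t - y $ j)) = (\<Sum>i\<in>{1..n}. kern i (t - node \<sigma> y i))" .
    have "{..n} = insert 0 {1..n}" by auto
    then have "(\<Sum>j\<le>n. kern j (t - node \<sigma> y j)) = kern 0 (t - node \<sigma> y 0) + (\<Sum>i\<in>{1..n}. kern i (t - node \<sigma> y i))"
      by simp
    then show ?thesis unfolding Fsum_def e by (simp add: kern_def node0)
  qed
  have notinf: "kern j s \<noteq> \<infinity>" if sr: "-2*pi < s" "s \<le> 2*pi" for j s
  proof -
    consider "0 < s \<and> s < 2*pi" | "s = 0" | "s < 0" | "s = 2*pi"
      using sr by (cases "s < 0"; cases "s = 0"; cases "s = 2*pi") auto
    then show ?thesis
    proof cases
      case 1 then show ?thesis using P1[of j] by auto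
    next
      case 2 then show ?thesis using kz by simp
    next
      case 3
      then have "kern j s = kern j (s + 2*pi)" using P2[of j] by simp
      then show ?thesis using P1[of j] 3 sr by auto
    next
      case 4
      have "kern j (0 + 2*pi) = kern j 0" using P2[of j] by blast
      then show ?thesis using 4 kz[of j] by simp
    qed
  qed
  have Fsum_open: "Fsum K0 K y t = ereal (Phi k (node \<sigma> y) t)"
    if y: "y \<in> S" and k: "k \<le> n" and t: "node \<sigma> y k < t" "t < node \<sigma> y (Suc k)" for y k t
  proof -
    have "kern j (t - node \<sigma> y j) = ereal (R j (ksys.arg k j (node \<sigma> y) t))" if j: "j \<le> n" for j
    proof -
      have ar: "0 < ksys.arg k j (node \<sigma> y) t" "ksys.arg k j (node \<sigma> y) t < 2*pi"
        using ks.arg_range[OF cfgS[OF y, unfolded cfg_def] k j t] by auto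
      show ?thesis
      proof (cases "j \<le> k")
        case True then show ?thesis using P1[of j] ar by (simp add: ks.arg_def)
      next
        case False
        then have "t - node \<sigma> y j = ksys.arg k j (node \<sigma> y) t - 2*pi" by (simp add: ks.arg_def)
        then have "kern j (t - node \<sigma> y j) = kern j (ksys.arg k j (node \<sigma> y) t)"
          using P2[of j, rule_format, of "ksys.arg k j (node \<sigma> y) t - 2*pi"] by simp
        then show ?thesis using P1[of j] ar by simp
      qed
    qed
    then show ?thesis unfolding Fsum_eq Phi_def ks.Phi_def by simp
  qed
  have Fsum_end: "Fsum K0 K y t = -\<infinity>"
    if y: "y \<in> S" and k: "k \<le> n" and t: "t = node \<sigma> y k \<or> t = node \<sigma> y (Suc k)" for y k t
  proof -
    define x where "x = node \<sigma> y"
    have cx: "ksys.cfg n x" using cfgS[OF y] unfolding x_def cfg_def .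
    have trange: "0 \<le> t" "t \<le> 2*pi" using t ks.cfg_range[OF cx, of k] ks.cfg_range[OF cx, of "Suc k"] k
      unfolding x_def[symmetric] by auto
    have ni: "\<forall>j\<in>{..n}. kern j (t - x j) \<noteq> \<infinity>"
    proof
      fix j assume "j \<in> {..n}"
      then have "0 \<le> x j" "x j < 2*pi" using ks.cfg_range[OF cx, of j] ks.cfg_lt2pi[OF cx, of j] by auto
      then show "kern j (t - x j) \<noteq> \<infinity>" using notinf[of "t - x j" j] trange by auto
    qed
    have "\<exists>j\<in>{..n}. kern j (t - x j) = -\<infinity>"
    proof (cases "t = x k")
      case True then show ?thesis using k kz by (intro bexI[of _ k]) auto
    next
      case False
      then have tS: "t = x (Suc k)" using t unfolding x_def by auto
      show ?thesis
      proof (cases "k < n")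
        case True then show ?thesis using tS kz by (intro bexI[of _ "Suc k"]) auto
      next
        case False
        then have "k = n" using k by simp
        then have "t - x 0 = 0 + 2*pi" using tS cx by (simp add: ks.cfg_def)
        moreover have "kern 0 (0 + 2*pi) = kern 0 0" using P2[of 0] by blast
        ultimately show ?thesis using kz[of 0] by (intro bexI[of _ 0]) auto
      qed
    qed
    then obtain j where "j \<in> {..n}" "kern j (t - x j) = -\<infinity>" by blast
    then show ?thesis unfolding Fsum_eq x_def[symmetric] using esum_minf[OF _ _ _ ni] by blast
  qed
  have mloc_eq: "mloc K0 K \<sigma> y k = ereal (mu k (node \<sigma> y))" if y: "y \<in> S" and k: "k \<le> n" for y k
  proof -
    define x where "x = node \<sigma> y"
    have cx: "ksys.cfg n x" using cfgS[OF y] unfolding x_def cfg_def .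
    obtain t where t: "x k < t" "t < x (Suc k)" "mu k x = Phi k x t"
      using ks.mu_attain[OF cx k] unfolding mu_def Phi_def by auto
    show ?thesis unfolding mloc_def x_def[symmetric]
    proof (rule antisym)
      show "(SUP t\<in>{x k..x (Suc k)}. Fsum K0 K y t) \<le> ereal (mu k x)"
      proof (rule SUP_least)
        fix s assume s: "s \<in> {x k..x (Suc k)}"
        show "Fsum K0 K y s \<le> ereal (mu k x)"
        proof (cases "s = x k \<or> s = x (Suc k)")
          case True then show ?thesis using Fsum_end[OF y k] unfolding x_def by auto
        next
          case False
          then have s': "x k < s" "s < x (Suc k)" using s by auto
          then have "Fsum K0 K y s = ereal (Phi k x s)" using Fsum_open[OF y k] unfolding x_def by auto
          moreover have "Phi k x s \<le> mu k x" using ks.mu_ge[OF cx k s'] unfolding mu_def Phi_def .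
          ultimately show ?thesis by simp
        qed
      qed
      have "ereal (mu k x) = Fsum K0 K y t" using Fsum_open[OF y k] t unfolding x_def by auto
      also have "\<dots> \<le> (SUP t\<in>{x k..x (Suc k)}. Fsum K0 K y t)" by (rule SUP_upper) (use t in auto)
      finally show "ereal (mu k x) \<le> (SUP t\<in>{x k..x (Suc k)}. Fsum K0 K y t)" .
    qed
  qed
  define invs where "invs i = inv_into {1..n} \<sigma> i" for i
  have invs: "invs i \<in> {1..n}" for i unfolding invs_def using surj by (intro inv_into_into) auto
  have invs_s: "k \<in> {1..n} \<Longrightarrow> invs (\<sigma> k) = k" for k unfolding invs_def using inj by simp
  define D where "D y = (\<chi> i. mu (invs i) (node \<sigma> y) - mu (invs i - 1) (node \<sigma> y))" for y
  have Delta_eq: "Delta K0 K \<sigma> y = D y" if y: "y \<in> S" for y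
    unfolding Delta_def D_def vec_eq_iff
  proof
    fix i
    have "invs i \<le> n" "invs i - 1 \<le> n" using invs[of i] by auto
    then show "(\<chi> i. let k = inv_into {1..CARD('n)} \<sigma> i
              in real_of_ereal (mloc K0 K \<sigma> y k - mloc K0 K \<sigma> y (k - 1))) $ i =
         (\<chi> i. mu (invs i) (node \<sigma> y) - mu (invs i - 1) (node \<sigma> y)) $ i"
      using mloc_eq[OF y] unfolding invs_def n_def by (simp add: Let_def)
  qed
  have Delta_s: "Delta K0 K \<sigma> y $ \<sigma> k = mu k (node \<sigma> y) - mu (k - 1) (node \<sigma> y)"
    if "y \<in> S" "k \<in> {1..n}" for y k
    using Delta_eq[OF that(1)] invs_s[OF that(2)] unfolding D_def by simp
  have inS: "y \<in> S \<longleftrightarrow> cfg (node \<sigma> y)" for y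
    unfolding cfg_def ks.cfg_def S_def simplex_sigma_def n_def[symmetric]
    by (simp add: node0 nodeS)
  have nodecomb: "node \<sigma> (u *\<^sub>R y1 + v *\<^sub>R y2) = (\<lambda>i. u * node \<sigma> y1 i + v * node \<sigma> y2 i)"
    if uv: "u + v = 1" for u v y1 y2
  proof (rule ext)
    fix i
    have e: "u * (2*pi) + v * (2*pi) = 2*pi"
    proof -
      have "u * (2*pi) + v * (2*pi) = (u+v)*(2*pi)" by (simp add: algebra_simps)
      then show ?thesis using uv by simp
    qed
    show "node \<sigma> (u *\<^sub>R y1 + v *\<^sub>R y2) i = u * node \<sigma> y1 i + v * node \<sigma> y2 i"
      unfolding node_def using e by simp
  qed
  have convS: "convex S"
  proof (rule convexI)
    fix y1 y2 u v assume h: "y1 \<in> S" "y2 \<in> S" "0 \<le> (u::real)" "0 \<le> v" "u + v = 1"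
    have "ksys.cfg n (\<lambda>i. u * node \<sigma> y1 i + v * node \<sigma> y2 i)"
      using ks.cfg_comb[of "node \<sigma> y1" "node \<sigma> y2" u v] h inS unfolding cfg_def by auto
    then show "u *\<^sub>R y1 + v *\<^sub>R y2 \<in> S" unfolding inS nodecomb[OF h(5)] cfg_def .
  qed
  have cn: "continuous_on UNIV (\<lambda>y::real^'n. node \<sigma> y k)" for k
    unfolding node_def by (cases "k = 0"; cases "k = CARD('n) + 1") (auto intro!: continuous_intros)
  have openS: "open S"
  proof -
    have "S = (\<Inter>k\<in>{..n}. {y. node \<sigma> y k < node \<sigma> y (Suc k)})"
      unfolding S_def simplex_sigma_def n_def by auto
    moreover have "open (\<Inter>k\<in>{..n}. {y. node \<sigma> y k < node \<sigma> y (Suc k)})"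
      by (intro open_INT ballI finite_atMost open_Collect_less cn)
    ultimately show ?thesis by simp
  qed
  have contmu: "continuous_on S (\<lambda>y. mu k (node \<sigma> y))" if k: "k \<le> n" for k
  proof -
    have "concave_on S (\<lambda>y. mu k (node \<sigma> y))"
      unfolding concave_on_iff
    proof (intro conjI convS ballI allI impI)
      fix y1 y2 and u v :: real assume h: "y1 \<in> S" "y2 \<in> S" "0 \<le> u" "0 \<le> v" "u + v = 1"
      show "u * mu k (node \<sigma> y1) + v * mu k (node \<sigma> y2) \<le> mu k (node \<sigma> (u *\<^sub>R y1 + v *\<^sub>R y2))"
        unfolding nodecomb[OF h(5)] mu_def
        by (rule ks.mu_concave) (use h inS k in \<open>auto simp: cfg_def\<close>)
    qed
    then have "convex_on S (\<lambda>y. - mu k (node \<sigma> y))" by (simp add: convex_on_iff_concave)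
    then have "continuous_on S (\<lambda>y. - mu k (node \<sigma> y))" by (rule convex_on_continuous[OF openS])
    then have "continuous_on S (\<lambda>y. - (- mu k (node \<sigma> y)))" by (rule continuous_on_minus)
    then show ?thesis by simp
  qed
  have contD: "continuous_on S (Delta K0 K \<sigma>)"
  proof -
    have "continuous_on S D" unfolding D_def
    proof (intro continuous_on_vec_lambda continuous_on_diff)
      fix i
      show "continuous_on S (\<lambda>y. mu (invs i) (node \<sigma> y))" using contmu invs[of i] by auto
      show "continuous_on S (\<lambda>y. mu (invs i - 1) (node \<sigma> y))" using contmu invs[of i] by auto
    qed
    then show ?thesis using continuous_on_cong[of S S "Delta K0 K \<sigma>" D] Delta_eq by simp
  qed
  have injD: "inj_on (Delta K0 K \<sigma>) S"
  proof (rule inj_onI)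
    fix y1 y2 assume y: "y1 \<in> S" "y2 \<in> S" "Delta K0 K \<sigma> y1 = Delta K0 K \<sigma> y2"
    define x1 where "x1 = node \<sigma> y1"
    define x2 where "x2 = node \<sigma> y2"
    have c1: "ksys.cfg n x1" using cfgS[OF y(1)] unfolding x1_def cfg_def .
    have c2: "ksys.cfg n x2" using cfgS[OF y(2)] unfolding x2_def cfg_def .
    have dif: "mu k x2 - mu (k-1) x2 = mu k x1 - mu (k-1) x1" if "k \<in> {1..n}" for k
      using Delta_s[OF y(1) that] Delta_s[OF y(2) that] y(3) unfolding x1_def x2_def by simp
    have cst: "k \<le> n \<Longrightarrow> mu k x2 - mu k x1 = mu 0 x2 - mu 0 x1" for k
    proof (induction k)
      case 0 then show ?case by simp
    next
      case (Suc k)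
      have "mu (Suc k) x2 - mu k x2 = mu (Suc k) x1 - mu k x1" using dif[of "Suc k"] Suc.prems by simp
      then show ?case using Suc by simp
    qed
    have eqx: "\<forall>j\<le>n. x2 j = x1 j"
    proof (rule ccontr)
      assume "\<not> (\<forall>j\<le>n. x2 j = x1 j)"
      then have "\<exists>j\<le>n. x2 j \<noteq> x1 j" by blast
      from ks.core[OF c1 c2 this] obtain p q where pq: "p \<le> n" "q \<le> n"
        "ksys.mu n R p x2 - ksys.mu n R p x1 < ksys.mu n R q x2 - ksys.mu n R q x1" by blast
      then show False using cst[OF pq(1)] cst[OF pq(2)] unfolding mu_def by simp
    qed
    show "y1 = y2" unfolding vec_eq_iff
    proof
      fix i
      obtain k where k: "k \<in> {1..n}" "i = \<sigma> k" using surj by blast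
      then have "x1 k = x2 k" using eqx by auto
      then show "y1 $ i = y2 $ i" using k nodek unfolding x1_def x2_def by simp
    qed
  qed
  have nonempty: "S \<noteq> {}"
  proof -
    define y0 :: "real^'n" where "y0 = (\<chi> i. 2*pi * real (invs i) / real (Suc n))"
    have nd: "node \<sigma> y0 k = 2*pi * real k / real (Suc n)" if kk: "k \<le> Suc n" for k
    proof -
      consider "k = 0" | "k = Suc n" | "k \<in> {1..n}"
        using kk by (cases "k = 0"; cases "k = Suc n") auto
      then show ?thesis
      proof cases
        case 1 then show ?thesis by (simp add: node0)
      next
        case 2 then show ?thesis by (simp add: nodeS)
      next
        case 3 then show ?thesis using nodek[OF 3] invs_s[OF 3] by (simp add: y0_def)
      qed
    qed
    have "cfg (node \<sigma> y0)"
      unfolding cfg_def ks.cfg_def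
    proof (intro conjI allI impI)
      show "node \<sigma> y0 0 = 0" by (simp add: node0)
      show "node \<sigma> y0 (Suc n) = 2*pi" by (simp add: nodeS)
      fix k assume k: "k \<le> n"
      have "2*pi * real k < 2*pi * real (Suc k)" by simp
      then have "2*pi * real k / real (Suc n) < 2*pi * real (Suc k) / real (Suc n)"
        by (intro divide_strict_right_mono) auto
      then show "node \<sigma> y0 k < node \<sigma> y0 (Suc k)" using nd[of k] nd[of "Suc k"] k by simp
    qed
    then have "y0 \<in> S" using inS by simp
    then show ?thesis by auto
  qed
  have closed_lim: "d \<in> Delta K0 K \<sigma> ` S"
    if z: "\<forall>m. z m \<in> Delta K0 K \<sigma> ` S" and zl: "z \<longlonglongrightarrow> d" for z :: "nat \<Rightarrow> real^'n" and d :: "real^'n"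
  proof -
    have "\<forall>m. \<exists>y. y \<in> S \<and> Delta K0 K \<sigma> y = z m"
    proof
      fix m
      obtain y where "y \<in> S" "z m = Delta K0 K \<sigma> y" using z by (elim allE[of _ m] imageE)
      then show "\<exists>y. y \<in> S \<and> Delta K0 K \<sigma> y = z m" by (intro exI[of _ y]) simp
    qed
    then have "\<exists>y. \<forall>m. y m \<in> S \<and> Delta K0 K \<sigma> (y m) = z m" by (rule choice)
    then obtain y where y: "\<forall>m. y m \<in> S \<and> Delta K0 K \<sigma> (y m) = z m" ..
    define Bx where "Bx = cbox (0::real^'n) (\<chi> i. 2*pi)"
    have SB: "y m \<in> Bx" for m
      unfolding Bx_def mem_box_cart
    proof
      fix i
      obtain k where k: "k \<in> {1..n}" "i = \<sigma> k" using surj by blast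
      have "ksys.cfg n (node \<sigma> (y m))" using cfgS y unfolding cfg_def by blast
      then have "0 \<le> node \<sigma> (y m) k \<and> node \<sigma> (y m) k \<le> 2*pi" using ks.cfg_range k by auto
      then show "(0::real^'n) $ i \<le> y m $ i \<and> y m $ i \<le> (\<chi> i. 2*pi) $ i" using k nodek by simp
    qed
    obtain l :: "real^'n" and r :: "nat \<Rightarrow> nat" where l: "l \<in> Bx" "strict_mono r" "(y \<circ> r) \<longlonglongrightarrow> l"
      using seq_compactE[OF compact_imp_seq_compact[OF compact_cbox[of 0 "\<chi> i. 2*pi"]], of y]
        SB unfolding Bx_def by blast
    define Y where "Y = y \<circ> r"
    have YS: "Y m \<in> S" for m using y by (simp add: Y_def)
    have DY: "(\<lambda>m. Delta K0 K \<sigma> (Y m)) \<longlonglongrightarrow> d"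
    proof -
      have "(z \<circ> r) \<longlonglongrightarrow> d" by (rule LIMSEQ_subseq_LIMSEQ[OF zl l(2)])
      moreover have "(z \<circ> r) = (\<lambda>m. Delta K0 K \<sigma> (Y m))" using y by (auto simp: Y_def)
      ultimately show ?thesis by simp
    qed
    have Yl: "Y \<longlonglongrightarrow> l" using l(3) unfolding Y_def .
    show "d \<in> Delta K0 K \<sigma> ` S"
    proof (cases "l \<in> S")
      case True
      have "isCont (Delta K0 K \<sigma>) l" using contD openS True continuous_on_eq_continuous_at by blast
      then have "(\<lambda>m. Delta K0 K \<sigma> (Y m)) \<longlonglongrightarrow> Delta K0 K \<sigma> l" by (rule isCont_tendsto_compose[OF _ Yl])
      then have "d = Delta K0 K \<sigma> l" using DY LIMSEQ_unique by blast
      then show ?thesis using True by blast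
    next
      case False
      define X where "X m = node \<sigma> (Y m)" for m
      have cX: "ksys.cfg n (X m)" for m using cfgS[OF YS] unfolding X_def cfg_def .
      have limX: "(\<lambda>m. X m i) \<longlonglongrightarrow> node \<sigma> l i" if "i \<le> Suc n" for i
        unfolding X_def node_def by (auto intro!: tendsto_intros Yl)
      have "\<not> (\<forall>k\<le>n. node \<sigma> l k < node \<sigma> l (Suc k))"
        using False unfolding S_def simplex_sigma_def n_def by auto
      then obtain k where k: "k \<le> n" "\<not> node \<sigma> l k < node \<sigma> l (Suc k)" by blast
      have "node \<sigma> l k \<le> node \<sigma> l (Suc k)" using ks.lim_props(3)[OF cX limX] k by simp
      then have kdeg: "node \<sigma> l k = node \<sigma> l (Suc k)" using k by simp
      obtain Kb where Kb: "Kb > 0" "\<forall>m. norm (Delta K0 K \<sigma> (Y m)) \<le> Kb"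
        using convergent_imp_Bseq[OF convergentI[OF DY]] unfolding Bseq_def by blast
      have bd0: "\<bar>mu k (X m) - mu 0 (X m)\<bar> \<le> real k * Kb" if "k \<le> n" for m k
        using that
      proof (induction k)
        case 0 then show ?case by simp
      next
        case (Suc k)
        have "mu (Suc k) (X m) - mu k (X m) = Delta K0 K \<sigma> (Y m) $ \<sigma> (Suc k)"
          using Delta_s[OF YS, of "Suc k" m] Suc.prems unfolding X_def by simp
        moreover have "\<bar>Delta K0 K \<sigma> (Y m) $ \<sigma> (Suc k)\<bar> \<le> Kb"
          using component_le_norm_cart[of "Delta K0 K \<sigma> (Y m)"] Kb(2) by (meson order_trans)
        moreover have "\<bar>mu k (X m) - mu 0 (X m)\<bar> \<le> real k * Kb" using Suc by simp
        ultimately show ?case by (simp add: algebra_simps)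
      qed
      have bd: "\<bar>ksys.mu n R k (X m) - ksys.mu n R 0 (X m)\<bar> \<le> real n * Kb" if "k \<le> n" for m k
      proof -
        have "real k * Kb \<le> real n * Kb" using that Kb(1) by (simp add: mult_right_mono)
        then show ?thesis using bd0[OF that, of m] unfolding mu_def by linarith
      qed
      show ?thesis by (rule FalseE, rule ks.boundary_contra[OF cX limX k(1) kdeg bd])
    qed
  qed
  have closedD: "closed (Delta K0 K \<sigma> ` S)"
    unfolding closed_sequential_limits using closed_lim by metis
  have img: "Delta K0 K \<sigma> ` S = UNIV"
    using clopen[of "Delta K0 K \<sigma> ` S"] invariance_of_domain[OF contD openS injD] closedD nonempty
    by auto
  obtain g where "homeomorphism S (Delta K0 K \<sigma> ` S) (Delta K0 K \<sigma>) g"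
    using invariance_of_domain_homeomorphism[OF openS contD _ injD] by auto
  then show ?thesis using img unfolding S_def by auto
qed


end
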